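(* Let $(s_1,\dots,s_n)$ be an abstract of degree $m$ with $s_1=1$, and let $(s_i,a_i,b_i)_{1\le i\le n}$ be any associated history. Then $$\#\{1\le i<n:\varpi_i=0\}\le\tfrac14n+\tfrac34m.$$
   Context: Fix $m_0\ge1$. An abstract of degree $m\in\{0,\dots,m_0\}$ is a sequence $(s_1,\dots,s_n)\in\{\pm1\}^n$ with $m+\sum_{i=1}^ns_i=0$ and $0<m+\sum_{i=1}^js_i\le m_0$ for all $1\le j<n$. An associated history is a sequence $(s_i,a_i,b_i)_{1\le i\le n}$ with $a_i\in\mathbb N$, $b_i\in\mathbb N\setminus\{0\}$, $a_i\ne b_i$, together with index sets $\omega_0=\{0,\dots,m\}$, $\omega_i=\omega_{i-1}\cup\{b_i\}$ if $s_i=1$ and $\omega_i=\omega_{i-1}\setminus\{b_i\}$ if $s_i=-1$, such that: if $s_i=1$ then $a_i\in\omega_{i-1}$ and $b_i=1+\max(m,a_1,b_1,\dots,a_{i-1},b_{i-1})$; if $s_i=-1$ then $a_i\in\omega_{i-1}$ and $b_i\in\omega_{i-1}\setminus\{a_i,0\}$; and if $(s_i,s_{i+1})=(1,-1)$ then $(a_i,b_i)\ne(a_{i+1},b_{i+1})$. Let $S=(n+m)/2$ (all indices used lie in $\{0,\dots,S\}$). Wave vectors: with formal variables $k_1,\dots,k_S\in\mathbb R^d$, set $q^0_0=-\sum_{j=1}^mk_j$, $q^0_j=k_j$ for $1\le j\le m$, $q^0_j=0$ for $m<j\le S$; for $i\ge1$: if $s_i=1$, $q^i_{a_i}=q^{i-1}_{a_i}-k_{b_i}$,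 $q^i_{b_i}=k_{b_i}$, $q^i_j=q^{i-1}_j$ otherwise; if $s_i=-1$, $q^i_{a_i}=q^{i-1}_{a_i}+q^{i-1}_{b_i}$, $q^i_{b_i}=0$, $q^i_j=q^{i-1}_j$ otherwise. Each $q^i_j$ is an integer linear combination of $k_1,\dots,k_S$. For $1\le i<n$, set $\varpi_i=1$ if either $\omega_i\setminus\{0,\dots,m\}\ne\emptyset$, or there exist $1\le j\le m<\ell\le S$ such that the coefficient of $k_\ell$ in $q^i_j$ is nonzero; otherwise $\varpi_i=0$. *)

theory Defs
  imports Complex_Main
begin

definition is_abstract :: "nat \<Rightarrow> nat \<Rightarrow> nat \<Rightarrow> (nat \<Rightarrow> int) \<Rightarrow> bool" where
  "is_abstract m0 m n s \<longleftrightarrow>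
     m \<le> m0 \<and>
     (\<forall>i\<in>{1..n}. s i = 1 \<or> s i = -1) \<and>
     int m + (\<Sum>i=1..n. s i) = 0 \<and>
     (\<forall>j. 1 \<le> j \<and> j < n \<longrightarrow>
        0 < int m + (\<Sum>i=1..j. s i) \<and> int m + (\<Sum>i=1..j. s i) \<le> int m0)"

fun omega :: "nat \<Rightarrow> (nat \<Rightarrow> int) \<Rightarrow> (nat \<Rightarrow> nat) \<Rightarrow> nat \<Rightarrow> nat set" where
  "omega m s b 0 = {0..m}"
| "omega m s b (Suc i) =
     (if s (Suc i) = 1 then insert (b (Suc i)) (omega m s b i)
      else omega m s b i - {b (Suc i)})"

definition is_history ::
  "nat \<Rightarrow> nat \<Rightarrow> (nat \<Rightarrow> int) \<Rightarrow> (nat \<Rightarrow> nat) \<Rightarrow> (nat \<Rightarrow> nat) \<Rightarrow> bool" where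
  "is_history m n s a b \<longleftrightarrow>
     (\<forall>i\<in>{1..n}.
        a i \<noteq> b i \<and> b i \<noteq> 0 \<and> a i \<in> omega m s b (i - 1) \<and>
        (s i = 1 \<longrightarrow> b i = 1 + Max ({m} \<union> a ` {1..<i} \<union> b ` {1..<i})) \<and>
        (s i = -1 \<longrightarrow> b i \<in> omega m s b (i - 1) - {a i, 0})) \<and>
     (\<forall>i. 1 \<le> i \<and> i < n \<longrightarrow> s i = 1 \<and> s (i + 1) = -1 \<longrightarrow>
        (a i, b i) \<noteq> (a (i + 1), b (i + 1)))"

text \<open>Wave vectors: wave m s a b i j l is the integer coefficient of k_l in q^i_j.\<close>

fun wave :: "nat \<Rightarrow> (nat \<Rightarrow> int) \<Rightarrow> (nat \<Rightarrow> nat) \<Rightarrow> (nat \<Rightarrow> nat) \<Rightarrow>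
             nat \<Rightarrow> nat \<Rightarrow> nat \<Rightarrow> int" where
  "wave m s a b 0 j l =
     (if j = 0 then (if 1 \<le> l \<and> l \<le> m then -1 else 0)
      else (if j \<le> m \<and> l = j then 1 else 0))"
| "wave m s a b (Suc i) j l =
     (if s (Suc i) = 1 then
        (if j = a (Suc i) then wave m s a b i j l - (if l = b (Suc i) then 1 else 0)
         else if j = b (Suc i) then (if l = b (Suc i) then 1 else 0)
         else wave m s a b i j l)
      else
        (if j = a (Suc i) then wave m s a b i j l + wave m s a b i (b (Suc i)) l
         else if j = b (Suc i) then 0
         else wave m s a b i j l))"

definition varpi :: "nat \<Rightarrow> nat \<Rightarrow> (nat \<Rightarrow> int) \<Rightarrow> (nat \<Rightarrow> nat) \<Rightarrow> (nat \<Rightarrow> nat) \<Rightarrow> nat \<Rightarrow> nat" where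
  "varpi m n s a b i =
     (let S = (n + m) div 2 in
      if omega m s b i - {0..m} \<noteq> {} \<or>
         (\<exists>j l. 1 \<le> j \<and> j \<le> m \<and> m < l \<and> l \<le> S \<and> wave m s a b i j l \<noteq> 0)
      then 1 else 0)"

end

theory Submission imports Defs begin

definition Mx :: "nat \<Rightarrow> (nat \<Rightarrow> nat) \<Rightarrow> (nat \<Rightarrow> nat) \<Rightarrow> nat \<Rightarrow> nat" where
  "Mx m a b i = Max ({m} \<union> a ` {1..<Suc i} \<union> b ` {1..<Suc i})"

definition Ucnt :: "(nat \<Rightarrow> int) \<Rightarrow> nat \<Rightarrow> nat" where
  "Ucnt s i = card {j \<in> {1..i}. s j = 1}"

lemma Mx_0: "Mx m a b 0 = m" by (simp add: Mx_def)

lemma Mx_Suc: "Mx m a b (Suc i) = max (max (a (Suc i)) (b (Suc i))) (Mx m a b i)"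
proof -
  have e: "{1..<Suc (Suc i)} = insert (Suc i) {1..<Suc i}" by auto
  have "{m} \<union> a ` {1..<Suc (Suc i)} \<union> b ` {1..<Suc (Suc i)}
      = insert (a (Suc i)) (insert (b (Suc i)) ({m} \<union> a ` {1..<Suc i} \<union> b ` {1..<Suc i}))"
    unfolding e by auto
  then show ?thesis unfolding Mx_def by (simp add: max.assoc max.left_commute)
qed

lemma Ucnt_0: "Ucnt s 0 = 0" by (simp add: Ucnt_def)

lemma Ucnt_Suc: "Ucnt s (Suc i) = Ucnt s i + (if s (Suc i) = 1 then 1 else 0)"
proof -
  have e: "{j \<in> {1..Suc i}. s j = 1} = (if s (Suc i) = 1 then insert (Suc i) {j \<in> {1..i}. s j = 1} else {j \<in> {1..i}. s j = 1})"
    by (auto simp: le_Suc_eq)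
  show ?thesis unfolding Ucnt_def e by simp
qed


definition Cc :: "nat \<Rightarrow> nat \<Rightarrow> (nat \<Rightarrow> int) \<Rightarrow> (nat \<Rightarrow> nat) \<Rightarrow> (nat \<Rightarrow> nat) \<Rightarrow> nat \<Rightarrow> nat" where
  "Cc m n s a b i = card {j. 1 \<le> j \<and> j \<le> i \<and> j < n \<and> varpi m n s a b j = 0}"

definition fc :: "nat \<Rightarrow> nat set \<Rightarrow> nat" where "fc mm w = card (w - {0..mm})"

definition rc :: "nat \<Rightarrow> nat set \<Rightarrow> nat" where "rc mm w = card ({0..mm} - w)"

context
  fixes m0 m n :: nat and s :: "nat \<Rightarrow> int" and a b :: "nat \<Rightarrow> nat"
  assumes ab: "is_abstract m0 m n s" and s1: "s 1 = 1" and hist: "is_history m n s a b"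
begin

lemma hist_i:
  assumes "1 \<le> i" "i \<le> n"
  shows "a i \<noteq> b i \<and> b i \<noteq> 0 \<and> a i \<in> omega m s b (i - 1) \<and>
        (s i = 1 \<longrightarrow> b i = 1 + Max ({m} \<union> a ` {1..<i} \<union> b ` {1..<i})) \<and>
        (s i = -1 \<longrightarrow> b i \<in> omega m s b (i - 1) - {a i, 0})"
  using hist assms unfolding is_history_def by auto

lemma spm: "1 \<le> i \<Longrightarrow> i \<le> n \<Longrightarrow> s i = 1 \<or> s i = -1"
  using ab unfolding is_abstract_def by auto

lemma om_bound:
  "i \<le> n \<Longrightarrow> omega m s b i \<subseteq> {0..Mx m a b i} \<and> Mx m a b i = m + Ucnt s i \<and> 0 \<in> omega m s b i"
proof (induction i)
  case 0
  then show ?case by (simp add: Mx_0 Ucnt_0)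
next
  case (Suc i)
  then have IH: "omega m s b i \<subseteq> {0..Mx m a b i}" "Mx m a b i = m + Ucnt s i" "0 \<in> omega m s b i" by auto
  have h: "a (Suc i) \<noteq> b (Suc i) \<and> b (Suc i) \<noteq> 0 \<and> a (Suc i) \<in> omega m s b i \<and>
        (s (Suc i) = 1 \<longrightarrow> b (Suc i) = 1 + Mx m a b i) \<and>
        (s (Suc i) = -1 \<longrightarrow> b (Suc i) \<in> omega m s b i - {a (Suc i), 0})"
    using hist_i[of "Suc i"] Suc.prems unfolding Mx_def by auto
  show ?case
  proof (cases "s (Suc i) = 1")
    case True
    moreover have "a (Suc i) \<le> Mx m a b i" using h IH(1) by auto
    ultimately have "Mx m a b (Suc i) = Mx m a b i + 1" using h unfolding Mx_Suc by auto
    then show ?thesis using True h IH by (auto simp: Ucnt_Suc)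
  next
    case False
    then have "s (Suc i) = -1" using spm[of "Suc i"] Suc.prems by auto
    then have "a (Suc i) \<le> Mx m a b i" "b (Suc i) \<le> Mx m a b i" using h IH(1) by auto
    then have "Mx m a b (Suc i) = Mx m a b i" unfolding Mx_Suc by auto
    then show ?thesis using False h IH \<open>s (Suc i) = -1\<close> by (auto simp: Ucnt_Suc)
  qed
qed

lemma Mx_step: "Suc i \<le> n \<Longrightarrow> Mx m a b (Suc i) = (if s (Suc i) = 1 then Mx m a b i + 1 else Mx m a b i)"
  using om_bound[of i] om_bound[of "Suc i"] by (simp add: Ucnt_Suc)

lemma b_plus: "Suc i \<le> n \<Longrightarrow> s (Suc i) = 1 \<Longrightarrow> b (Suc i) = Mx m a b i + 1"
  using hist_i[of "Suc i"] unfolding Mx_def by auto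

lemma wave_zero: "i \<le> n \<Longrightarrow> Mx m a b i < l \<Longrightarrow> wave m s a b i j l = 0"
proof (induction i arbitrary: j)
  case 0
  then show ?case by (simp add: Mx_0)
next
  case (Suc i)
  show ?case
  proof (cases "s (Suc i) = 1")
    case True
    then have "b (Suc i) = Mx m a b i + 1" "Mx m a b (Suc i) = Mx m a b i + 1"
      using b_plus Mx_step Suc.prems by auto
    then show ?thesis using Suc True by auto
  next
    case False
    then have "Mx m a b (Suc i) = Mx m a b i"
      using Mx_step Suc.prems by auto
    then show ?thesis using Suc False by auto
  qed
qed

lemma sum_U: "i \<le> n \<Longrightarrow> (\<Sum>j=1..i. s j) = 2 * int (Ucnt s i) - int i"
proof (induction i)
  case 0
  then show ?case by (simp add: Ucnt_0)
next
  case (Suc i)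
  then show ?case using spm[of "Suc i"] by (auto simp: Ucnt_Suc)
qed


lemma n_eq: "n = 2 * Ucnt s n + m"
  using ab sum_U[of n] unfolding is_abstract_def by auto

lemma key:
  assumes "k < n" "1 \<le> k" "varpi m n s a b k = 0"
  shows "s k = -1 \<and> 2 \<le> k \<and> s (k - 1) = -1 \<and> omega m s b k \<subseteq> {0..m}"
proof -
  have om: "omega m s b k \<subseteq> {0..m}"
    and wv: "\<And>j l. 1 \<le> j \<Longrightarrow> j \<le> m \<Longrightarrow> m < l \<Longrightarrow> l \<le> (n + m) div 2 \<Longrightarrow> wave m s a b k j l = 0"
    using assms(3) unfolding varpi_def Let_def by (auto split: if_splits)
  have S: "(n + m) div 2 = m + Ucnt s n" using n_eq by simp
  obtain t where kt: "k = Suc t" using assms(2) by (cases k) auto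
  have sk: "s k = -1"
  proof (rule ccontr)
    assume "s k \<noteq> -1"
    then have "s k = 1" using spm[of k] assms by auto
    then have "b k = Mx m a b t + 1" using b_plus[of t] kt assms by auto
    moreover have "Mx m a b t \<ge> m" using om_bound[of t] kt assms by auto
    moreover have "b k \<in> omega m s b k" using kt \<open>s k = 1\<close> by simp
    ultimately show False using om by auto
  qed
  have k2: "2 \<le> k" using sk s1 assms(2) by (cases "k = 1") auto
  then obtain u where ku: "k = Suc (Suc u)" by (metis add_2_eq_Suc le_Suc_ex)
  have sk1: "s (Suc u) = -1"
  proof (rule ccontr)
    assume "s (Suc u) \<noteq> -1"
    then have sp: "s (Suc u) = 1" using spm[of "Suc u"] assms ku by auto
    define \<alpha> where "\<alpha> = a (Suc u)"
    define \<beta> where "\<beta> = b (Suc u)"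
    define \<gamma> where "\<gamma> = a (Suc (Suc u))"
    have nle: "Suc (Suc u) \<le> n" "Suc u \<le> n" "u \<le> n" using assms ku by auto
    have bet: "\<beta> = Mx m a b u + 1" using b_plus[of u] sp nle unfolding \<beta>_def by auto
    have Mu: "Mx m a b u = m + Ucnt s u" using om_bound[of u] nle by auto
    have h1: "\<alpha> \<noteq> \<beta>" "\<alpha> \<in> omega m s b u" using hist_i[of "Suc u"] nle unfolding \<alpha>_def \<beta>_def by auto
    have h2: "\<gamma> \<noteq> b (Suc (Suc u))" "\<gamma> \<in> omega m s b (Suc u)"
      "b (Suc (Suc u)) \<in> omega m s b (Suc u)"
      using hist_i[of "Suc (Suc u)"] nle sk ku unfolding \<gamma>_def by auto
    have omS: "omega m s b (Suc u) = insert \<beta> (omega m s b u)" using sp unfolding \<beta>_def by simp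
    have omSS: "omega m s b (Suc (Suc u)) = omega m s b (Suc u) - {b (Suc (Suc u))}"
      using sk ku by simp
    have "\<beta> \<notin> {0..m}" using bet Mu by auto
    then have "\<beta> \<notin> omega m s b (Suc (Suc u))" using om ku by auto
    then have bb: "b (Suc (Suc u)) = \<beta>" using omS omSS by auto
    have "(a (Suc u), b (Suc u)) \<noteq> (a (Suc u + 1), b (Suc u + 1))"
    proof -
      have "\<forall>i. 1 \<le> i \<and> i < n \<longrightarrow> s i = 1 \<and> s (i + 1) = -1 \<longrightarrow>
        (a i, b i) \<noteq> (a (i + 1), b (i + 1))" using hist unfolding is_history_def by blast
      then show ?thesis using sp sk ku assms by (metis Suc_eq_plus1 Suc_lessD le_add1 plus_1_eq_Suc)
    qed
    then have ag: "\<alpha> \<noteq> \<gamma>" using bb unfolding \<alpha>_def \<beta>_def \<gamma>_def by auto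
    have gb: "\<gamma> \<noteq> \<beta>" using h2 bb by auto
    have om': "omega m s b (Suc (Suc u)) \<subseteq> {0..m}" using om ku by (simp only:)
    have "\<alpha> \<in> omega m s b (Suc (Suc u))" unfolding omSS omS bb using h1 by blast
    then have ain: "\<alpha> \<in> {0..m}" using om' by blast
    have "\<gamma> \<in> omega m s b (Suc (Suc u))" unfolding omSS bb using h2 gb by blast
    then have gin: "\<gamma> \<in> {0..m}" using om' by blast
    have w0: "\<And>j. wave m s a b u j \<beta> = 0" using wave_zero[of u] nle bet by auto
    have w1a: "wave m s a b (Suc u) \<alpha> \<beta> = -1" using sp w0 unfolding \<alpha>_def \<beta>_def by (simp del: wave.simps add: wave.simps(2)[of m s a b u])
    have w1b: "wave m s a b (Suc u) \<beta> \<beta> = 1" using sp w0 h1 unfolding \<alpha>_def \<beta>_def by (simp del: wave.simps add: wave.simps(2)[of m s a b u])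
    have w1g: "wave m s a b (Suc u) \<gamma> \<beta> = 0" using sp w0 ag gb unfolding \<alpha>_def \<beta>_def by (simp del: wave.simps add: wave.simps(2)[of m s a b u])
    have w2g: "wave m s a b (Suc (Suc u)) \<gamma> \<beta> = 1"
      using sk ku w1b w1g bb unfolding \<gamma>_def by (simp del: wave.simps add: wave.simps(2)[of m s a b "Suc u"])
    have w2a: "wave m s a b (Suc (Suc u)) \<alpha> \<beta> = -1"
      using sk ku w1a bb ag h1 unfolding \<gamma>_def by (simp del: wave.simps add: wave.simps(2)[of m s a b "Suc u"])
    have Ul: "Ucnt s (Suc u) \<le> Ucnt s n"
      unfolding Ucnt_def by (rule card_mono) (use nle in auto)
    have bS: "m < \<beta>" "\<beta> \<le> (n + m) div 2" using bet Mu S Ul sp by (auto simp: Ucnt_Suc)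
    show False
    proof (cases "\<alpha> = 0")
      case True
      then have "1 \<le> \<gamma>" using ag by auto
      then show False using wv[of \<gamma> \<beta>] gin bS w2g ku by auto
    next
      case False
      then show False using wv[of \<alpha> \<beta>] ain bS w2a ku by auto
    qed
  qed
  show ?thesis using sk k2 sk1 om ku by auto
qed


lemma fin_om: "i \<le> n \<Longrightarrow> finite (omega m s b i)"
  using om_bound[of i] finite_subset by blast

lemma step_plus:
  assumes "Suc i \<le> n" "s (Suc i) = 1"
  shows "fc m (omega m s b (Suc i)) = fc m (omega m s b i) + 1 \<and> rc m (omega m s b (Suc i)) = rc m (omega m s b i)"
proof -
  have bb: "b (Suc i) = Mx m a b i + 1" using b_plus assms by auto
  have ob: "omega m s b i \<subseteq> {0..Mx m a b i}" "Mx m a b i \<ge> m" using om_bound[of i] assms by auto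
  have nb: "b (Suc i) \<notin> omega m s b i" using bb ob by auto
  have bm: "b (Suc i) \<notin> {0..m}" using bb ob by auto
  have fin: "finite (omega m s b i)" using fin_om assms by auto
  have o: "omega m s b (Suc i) = insert (b (Suc i)) (omega m s b i)" using assms by simp
  have e1: "omega m s b (Suc i) - {0..m} = insert (b (Suc i)) (omega m s b i - {0..m})" unfolding o using bm by auto
  have e2: "{0..m} - omega m s b (Suc i) = {0..m} - omega m s b i" unfolding o using bm by auto
  show ?thesis unfolding fc_def rc_def e1 e2 using nb fin by simp
qed

lemma step_minus:
  assumes "Suc i \<le> n" "s (Suc i) = -1"
  shows "(b (Suc i) \<le> m \<longrightarrow> fc m (omega m s b (Suc i)) = fc m (omega m s b i) \<and> rc m (omega m s b (Suc i)) = rc m (omega m s b i) + 1)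
    \<and> (m < b (Suc i) \<longrightarrow> fc m (omega m s b i) \<ge> 1 \<and> fc m (omega m s b (Suc i)) = fc m (omega m s b i) - 1 \<and> rc m (omega m s b (Suc i)) = rc m (omega m s b i))"
proof -
  have bin: "b (Suc i) \<in> omega m s b i" using hist_i[of "Suc i"] assms by auto
  have fin: "finite (omega m s b i)" using fin_om assms by auto
  have o: "omega m s b (Suc i) = omega m s b i - {b (Suc i)}" using assms by simp
  show ?thesis
  proof (intro conjI impI)
    assume bm: "b (Suc i) \<le> m"
    have e1: "omega m s b (Suc i) - {0..m} = omega m s b i - {0..m}" unfolding o using bm by auto
    have e2: "{0..m} - omega m s b (Suc i) = insert (b (Suc i)) ({0..m} - omega m s b i)" unfolding o using bm bin by auto
    show "fc m (omega m s b (Suc i)) = fc m (omega m s b i)" unfolding fc_def e1 ..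
    show "rc m (omega m s b (Suc i)) = rc m (omega m s b i) + 1" unfolding rc_def e2 using bin by simp
  next
    assume bm: "m < b (Suc i)"
    have e1: "omega m s b (Suc i) - {0..m} = (omega m s b i - {0..m}) - {b (Suc i)}" unfolding o using bm by auto
    have e2: "{0..m} - omega m s b (Suc i) = {0..m} - omega m s b i" unfolding o using bm bin by auto
    have bin2: "b (Suc i) \<in> omega m s b i - {0..m}" using bin bm by auto
    have fin2: "finite (omega m s b i - {0..m})" using fin by auto
    show "fc m (omega m s b i) \<ge> 1" unfolding fc_def using bin2 fin2
      by (metis One_nat_def Suc_leI card_gt_0_iff empty_iff)
    show "fc m (omega m s b (Suc i)) = fc m (omega m s b i) - 1" unfolding fc_def e1 using bin2 fin2 by simp
    show "rc m (omega m s b (Suc i)) = rc m (omega m s b i)" unfolding rc_def e2 ..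
  qed
qed



lemma Cc_Suc: "Cc m n s a b (Suc i) = Cc m n s a b i + (if Suc i < n \<and> varpi m n s a b (Suc i) = 0 then 1 else 0)"
proof -
  have e: "{j. 1 \<le> j \<and> j \<le> Suc i \<and> j < n \<and> varpi m n s a b j = 0} =
    (if Suc i < n \<and> varpi m n s a b (Suc i) = 0 then insert (Suc i) {j. 1 \<le> j \<and> j \<le> i \<and> j < n \<and> varpi m n s a b j = 0}
     else {j. 1 \<le> j \<and> j \<le> i \<and> j < n \<and> varpi m n s a b j = 0})" by (auto simp: le_Suc_eq)
  have f: "finite {j. 1 \<le> j \<and> j \<le> i \<and> j < n \<and> varpi m n s a b j = 0}" by (rule finite_subset[of _ "{..i}"]) auto
  show ?thesis unfolding Cc_def e using f by simp
qed

lemma inv: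
  assumes "i \<le> n"
  shows "(fc m (omega m s b i) = 0 \<longrightarrow> 2 * int (rc m (omega m s b i)) + int (Ucnt s i) - 2 * int (Cc m n s a b i) \<ge> 0) \<and>
    (fc m (omega m s b i) > 0 \<longrightarrow> 2 * int (rc m (omega m s b i)) + int (Ucnt s i) - 2 * int (Cc m n s a b i) \<ge> 1 \<and>
       (2 * int (rc m (omega m s b i)) + int (Ucnt s i) - 2 * int (Cc m n s a b i) \<ge> 2 \<or> (s i = 1 \<and> fc m (omega m s b i) = 1)))"
  using assms
proof (induction i)
  case 0
  have "Cc m n s a b 0 = 0" unfolding Cc_def by simp
  moreover have "fc m (omega m s b 0) = 0" unfolding fc_def by simp
  ultimately show ?case by (simp add: Ucnt_0)
next
  case (Suc i)
  define f where "f = fc m (omega m s b i)"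
  define f' where "f' = fc m (omega m s b (Suc i))"
  define B where "B = 2 * int (rc m (omega m s b i)) + int (Ucnt s i) - 2 * int (Cc m n s a b i)"
  define B' where "B' = 2 * int (rc m (omega m s b (Suc i))) + int (Ucnt s (Suc i)) - 2 * int (Cc m n s a b (Suc i))"
  have IH: "(f = 0 \<longrightarrow> B \<ge> 0) \<and> (f > 0 \<longrightarrow> B \<ge> 1 \<and> (B \<ge> 2 \<or> (s i = 1 \<and> f = 1)))"
    using Suc unfolding f_def B_def by auto
  have goal: "(f' = 0 \<longrightarrow> B' \<ge> 0) \<and> (f' > 0 \<longrightarrow> B' \<ge> 1 \<and> (B' \<ge> 2 \<or> (s (Suc i) = 1 \<and> f' = 1)))"
  proof (cases "s (Suc i) = 1")
    case True
    have nc: "\<not> (Suc i < n \<and> varpi m n s a b (Suc i) = 0)" using key[of "Suc i"] True by auto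
    have "f' = f + 1" "B' = B + 1" using step_plus[of i] True Suc.prems nc
      unfolding f_def f'_def B_def B'_def by (auto simp: Ucnt_Suc Cc_Suc)
    then show ?thesis using IH True by auto
  next
    case False
    then have sm: "s (Suc i) = -1" using spm[of "Suc i"] Suc.prems by auto
    have U: "Ucnt s (Suc i) = Ucnt s i" using sm by (simp add: Ucnt_Suc)
    show ?thesis
    proof (cases "b (Suc i) \<le> m")
      case True
      then have ff: "f' = f" and rr: "rc m (omega m s b (Suc i)) = rc m (omega m s b i) + 1"
        using step_minus[of i] sm Suc.prems unfolding f_def f'_def by auto
      show ?thesis
      proof (cases "Suc i < n \<and> varpi m n s a b (Suc i) = 0")
        case True
        then have "f' = 0" using key[of "Suc i"] unfolding f'_def fc_def
          by (metis Diff_eq_empty_iff card.empty le_add1 plus_1_eq_Suc)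
        moreover have "B' = B" using True rr U unfolding B_def B'_def by (simp add: Cc_Suc)
        ultimately show ?thesis using IH ff by auto
      next
        case nc: False
        have "B' = B + 2" using nc rr U unfolding B_def B'_def by (simp add: Cc_Suc)
        then show ?thesis using IH ff by auto
      qed
    next
      case bm: False
      then have ff: "f \<ge> 1" "f' = f - 1" and rr: "rc m (omega m s b (Suc i)) = rc m (omega m s b i)"
        using step_minus[of i] sm Suc.prems unfolding f_def f'_def by auto
      show ?thesis
      proof (cases "Suc i < n \<and> varpi m n s a b (Suc i) = 0")
        case True
        have kk: "s (Suc i) = -1 \<and> 2 \<le> Suc i \<and> s (Suc i - 1) = -1 \<and> omega m s b (Suc i) \<subseteq> {0..m}"
          by (rule key) (use True in auto)
        then have k: "s i = -1" "f' = 0" unfolding f'_def fc_def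
          by (metis diff_Suc_1, metis Diff_eq_empty_iff card.empty)
        moreover have "B' = B - 2" using True rr U unfolding B_def B'_def by (simp add: Cc_Suc)
        ultimately show ?thesis using IH ff by auto
      next
        case nc: False
        have "B' = B" using nc rr U unfolding B_def B'_def by (simp add: Cc_Suc)
        then show ?thesis using IH ff by auto
      qed
    qed
  qed
  then show ?case unfolding f'_def B'_def by blast
qed
end

theorem lemma6p9:
  fixes m0 m n :: nat and s :: "nat \<Rightarrow> int" and a b :: "nat \<Rightarrow> nat"
  assumes "m0 \<ge> 1"
    and "is_abstract m0 m n s"
    and "s 1 = 1"
    and "is_history m n s a b"
  shows "real (card {i. 1 \<le> i \<and> i < n \<and> varpi m n s a b i = 0})
           \<le> real n / 4 + 3 * real m / 4"
proof -
  let ?C = "card {i. 1 \<le> i \<and> i < n \<and> varpi m n s a b i = 0}"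
  have e: "{j. 1 \<le> j \<and> j \<le> n \<and> j < n \<and> varpi m n s a b j = 0} = {i. 1 \<le> i \<and> i < n \<and> varpi m n s a b i = 0}"
    by auto
  have ce: "Cc m n s a b n = ?C" unfolding Cc_def using e by simp
  have I: "2 * int (rc m (omega m s b n)) + int (Ucnt s n) - 2 * int ?C \<ge> 0"
    using inv[OF assms(2-4), of n] unfolding ce by (cases "fc m (omega m s b n) = 0") auto
  have z: "0 \<in> omega m s b n" using om_bound[OF assms(2-4), of n] by auto
  have sub: "{0..m} - omega m s b n \<subseteq> {1..m}"
  proof
    fix x assume x: "x \<in> {0..m} - omega m s b n"
    then have "x \<noteq> 0" using z by (cases x) auto
    then show "x \<in> {1..m}" using x by simp
  qed
  have "rc m (omega m s b n) \<le> m" unfolding rc_def using card_mono[OF finite_atLeastAtMost sub] by simp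
  moreover have "n = 2 * Ucnt s n + m" using n_eq[OF assms(2-4)] .
  ultimately have "4 * ?C \<le> n + 3 * m" using I by linarith
  then have "real (4 * ?C) \<le> real (n + 3 * m)" by (simp only: of_nat_le_iff)
  then show ?thesis by simp
qed

end
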